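(* Assume $\sigma_1(x)=\tfrac12\sigma_1''(0)(x-a_1)(x-b_1)$ with $\sigma_1''(0)\ne0$ and real $a_1<0<b_1$, and that $(1-q^{-1})\tau'(0)=-\tfrac12\sigma_1''(0)$ and $(1-q^{-1})\tau(0)=\tfrac12\sigma_1''(0)(a_1+b_1)$, so that $\sigma_2(x)\equiv q\tfrac12\sigma_1''(0)a_1b_1$ is a nonzero constant. Put $a=a_1$, $b=b_1$ and $$\rho(x)=(qx/a,\,qx/b;q)_\infty.$$ Then there exist polynomials $P_n$, $n\in\mathbb{N}_0$, with $P_n$ of degree $n$ a solution of the q-EHT with $\lambda=\lambda_n$, and nonzero constants $d_n^2$, such that for all $m,n\in\mathbb{N}_0$ $$\int_a^bP_n(x)P_m(x)\rho(x)\,d_qx=d_n^2\delta_{mn},$$ i.e. orthogonality with respect to $\rho$ supported on $\{q^ka\}_{k\in\mathbb{N}_0}\cup\{q^kb\}_{k\in\mathbb{N}_0}$.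
   Context: Throughout $0<q<1$. For a function $y$ and $\zeta\in\{q,q^{-1}\}$, $D_\zeta y(x)=\frac{y(x)-y(\zeta x)}{(1-\zeta)x}$ for $x\ne0$ and $D_\zeta y(0)=y'(0)$; $[n]_q=\frac{1-q^n}{1-q}$. Let $\sigma_1$ be a real polynomial of degree at most two, $\tau(x)=\tau'(0)x+\tau(0)$ a real polynomial with $\tau'(0)\ne0$, and $\sigma_2(x):=q[\sigma_1(x)+(1-q^{-1})x\tau(x)]$. The q-EHT with parameter $n$ is $\sigma_1(x)D_{q^{-1}}D_qy(x)+\tau(x)D_qy(x)+\lambda_ny(x)=0$, $\lambda_n=-[n]_q\big(\tau'(0)+\tfrac12[n-1]_{q^{-1}}\sigma_1''(0)\big)$. $(\beta;q)_\infty=\prod_{k\ge0}(1-\beta q^k)$, $(\beta_1,\beta_2;q)_\infty=(\beta_1;q)_\infty(\beta_2;q)_\infty$. For $a<0<b$, $\int_a^b f(x)\,d_qx=(1-q)b\sum_{j\ge0}q^jf(q^jb)+(1-q)(-a)\sum_{j\ge0}q^jf(q^ja)$. *)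

theory Defs
  imports "HOL-Analysis.Analysis" "HOL-Computational_Algebra.Polynomial"
begin

definition qD :: "real \<Rightarrow> (real \<Rightarrow> real) \<Rightarrow> real \<Rightarrow> real" where
  "qD \<zeta> y x = (if x = 0 then deriv y 0 else (y x - y (\<zeta> * x)) / ((1 - \<zeta>) * x))"

definition qnum :: "real \<Rightarrow> int \<Rightarrow> real" where
  "qnum q n = (1 - q powi n) / (1 - q)"

definition qpoch_inf :: "real \<Rightarrow> real \<Rightarrow> real" where
  "qpoch_inf \<beta> q = (\<Prod>k. 1 - \<beta> * q ^ k)"

definition qint :: "real \<Rightarrow> real \<Rightarrow> real \<Rightarrow> (real \<Rightarrow> real) \<Rightarrow> real" where
  "qint q a b f = (1 - q) * b * (\<Sum>j. q ^ j * f (q ^ j * b))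
                 + (1 - q) * (- a) * (\<Sum>j. q ^ j * f (q ^ j * a))"

definition qEHT :: "real \<Rightarrow> (real \<Rightarrow> real) \<Rightarrow> (real \<Rightarrow> real) \<Rightarrow> real \<Rightarrow> (real \<Rightarrow> real) \<Rightarrow> bool" where
  "qEHT q \<sigma>1 \<tau> lm y \<longleftrightarrow>
     (\<forall>x. \<sigma>1 x * qD (1 / q) (qD q y) x + \<tau> x * qD q y x + lm * y x = 0)"

definition lam :: "real \<Rightarrow> real \<Rightarrow> real \<Rightarrow> nat \<Rightarrow> real" where
  "lam q t1 s n = - qnum q (int n) * (t1 + 1/2 * qnum (1 / q) (int n - 1) * s)"

end

theory Submission
  imports Defs
begin


lemma qpoch_conv:
  assumes "0 < q" "q < 1"
  shows "convergent_prod (\<lambda>k. 1 - \<beta> * q ^ k :: real)"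
proof -
  have "summable (\<lambda>k. norm ((1 - \<beta> * q ^ k) - 1))"
    using assms by (simp add: abs_mult power_abs summable_mult summable_geometric)
  then show ?thesis
    by (intro abs_convergent_prod_imp_convergent_prod summable_imp_abs_convergent_prod)
qed

lemma qpoch_rec:
  assumes "0 < q" "q < 1"
  shows "qpoch_inf \<beta> q = (1 - \<beta>) * qpoch_inf (\<beta> * q) q"
proof -
  have L1: "(\<lambda>n. \<Prod>i\<le>n. 1 - \<beta> * q ^ i) \<longlonglongrightarrow> qpoch_inf \<beta> q"
    unfolding qpoch_inf_def by (rule convergent_prod_LIMSEQ[OF qpoch_conv[OF assms]])
  have L2: "(\<lambda>n. \<Prod>i\<le>n. 1 - \<beta> * q * q ^ i) \<longlonglongrightarrow> qpoch_inf (\<beta> * q) q"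
    unfolding qpoch_inf_def by (rule convergent_prod_LIMSEQ[OF qpoch_conv[OF assms]])
  have e: "(\<Prod>i\<le>Suc n. 1 - \<beta> * q ^ i) = (1 - \<beta>) * (\<Prod>i\<le>n. 1 - \<beta> * q * q ^ i)" for n
    unfolding prod.atMost_Suc_shift by (simp add: mult_ac)
  have "(\<lambda>n. \<Prod>i\<le>Suc n. 1 - \<beta> * q ^ i) \<longlonglongrightarrow> (1 - \<beta>) * qpoch_inf (\<beta> * q) q"
    unfolding e using L2 by (intro tendsto_mult tendsto_const)
  moreover have "(\<lambda>n. \<Prod>i\<le>Suc n. 1 - \<beta> * q ^ i) \<longlonglongrightarrow> qpoch_inf \<beta> q"
    using L1 by (rule LIMSEQ_Suc)
  ultimately show ?thesis
    using LIMSEQ_unique by blast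
qed

lemma qpoch_split:
  assumes "0 < q" "q < 1"
  shows "qpoch_inf \<beta> q = (\<Prod>k<N. 1 - \<beta> * q ^ k) * qpoch_inf (\<beta> * q ^ N) q"
proof (induction N)
  case 0 then show ?case by simp
next
  case (Suc N)
  have e: "\<beta> * q ^ N * q = \<beta> * q ^ Suc N" by (simp add: mult_ac)
  have "qpoch_inf (\<beta> * q ^ N) q = (1 - \<beta> * q ^ N) * qpoch_inf (\<beta> * q ^ Suc N) q"
    using qpoch_rec[OF assms, of "\<beta> * q ^ N"] unfolding e .
  with Suc show ?case by (simp add: mult.assoc)
qed

lemma qpoch_tail_lim:
  assumes "0 < q" "q < 1" "\<And>k. 1 - \<beta> * q ^ k \<noteq> 0"
  shows "(\<lambda>N. qpoch_inf (\<beta> * q ^ N) q) \<longlonglongrightarrow> 1"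
proof -
  have nz: "qpoch_inf \<beta> q \<noteq> 0"
    unfolding qpoch_inf_def using assms by (intro prodinf_nonzero qpoch_conv) auto
  have L: "(\<lambda>N. \<Prod>k<N. 1 - \<beta> * q ^ k) \<longlonglongrightarrow> qpoch_inf \<beta> q"
    unfolding LIMSEQ_lessThan_iff_atMost qpoch_inf_def
    by (rule convergent_prod_LIMSEQ[OF qpoch_conv[OF assms(1,2)]])
  have "(\<lambda>N. qpoch_inf \<beta> q / (\<Prod>k<N. 1 - \<beta> * q ^ k)) \<longlonglongrightarrow> qpoch_inf \<beta> q / qpoch_inf \<beta> q"
    by (intro tendsto_divide tendsto_const L nz)
  moreover have "qpoch_inf \<beta> q / (\<Prod>k<N. 1 - \<beta> * q ^ k) = qpoch_inf (\<beta> * q ^ N) q" for N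
  proof -
    have "(\<Prod>k<N. 1 - \<beta> * q ^ k) \<noteq> 0" using assms(3) by auto
    then show ?thesis using qpoch_split[OF assms(1,2), of \<beta> N] by (simp add: field_simps)
  qed
  ultimately show ?thesis using nz by simp
qed

lemma qpoch_pos:
  assumes "0 < q" "q < 1" "\<And>k. 0 < 1 - \<beta> * q ^ k"
  shows "0 < qpoch_inf \<beta> q"
  unfolding qpoch_inf_def using assms by (intro less_0_prodinf qpoch_conv) auto

lemma qpoch_one:
  assumes "0 < q" "q < 1"
  shows "qpoch_inf 1 q = 0"
  using qpoch_rec[OF assms, of 1] by simp

definition qn :: "real \<Rightarrow> nat \<Rightarrow> real" where "qn z m = (1 - z ^ m) / (1 - z)"
definition dz :: "real \<Rightarrow> real poly \<Rightarrow> real poly" where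
  "dz z p = Abs_poly (\<lambda>k. coeff p (Suc k) * qn z (Suc k))"

lemma coeff_dz: "coeff (dz z p) k = coeff p (Suc k) * qn z (Suc k)"
proof -
  have "coeff (Abs_poly (\<lambda>k. coeff p (Suc k) * qn z (Suc k))) = (\<lambda>k. coeff p (Suc k) * qn z (Suc k))"
    by (rule coeff_Abs_poly[of "degree p"]) (simp add: coeff_eq_0)
  then show ?thesis by (simp add: dz_def)
qed

lemma poly_bound:
  fixes p :: "real poly"
  assumes "degree p \<le> N"
  shows "poly p x = (\<Sum>i\<le>N. coeff p i * x ^ i)"
  using assms
  by (subst poly_altdef, intro sum.mono_neutral_left) (auto simp: coeff_eq_0)

lemma degree_dz: "degree (dz z p) \<le> degree p"
  by (rule degree_le) (simp add: coeff_dz coeff_eq_0)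

lemma poly_dz:
  assumes "z \<noteq> 1" "x \<noteq> 0"
  shows "poly (dz z p) x = (poly p x - poly p (z * x)) / ((1 - z) * x)"
proof -
  define N where "N = degree p"
  have "(1 - z) * x * poly (dz z p) x = (\<Sum>k\<le>N. coeff p (Suc k) * (x ^ Suc k - (z * x) ^ Suc k))"
    unfolding poly_bound[OF degree_dz[of z p, folded N_def]] sum_distrib_left
  proof (rule sum.cong[OF refl])
    fix k
    show "(1 - z) * x * (coeff (dz z p) k * x ^ k) = coeff p (Suc k) * (x ^ Suc k - (z * x) ^ Suc k)"
      using assms by (simp add: coeff_dz qn_def field_simps power_mult_distrib)
  qed
  also have "\<dots> = (\<Sum>i\<le>Suc N. coeff p i * (x ^ i - (z * x) ^ i))"
    unfolding sum.atMost_Suc_shift by simp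
  also have "\<dots> = poly p x - poly p (z * x)"
    using poly_bound[of p "Suc N"] by (simp add: N_def sum_subtractf algebra_simps)
  finally show ?thesis using assms by (simp add: field_simps)
qed

lemma qD_poly:
  assumes "z \<noteq> 1"
  shows "qD z (poly p) = poly (dz z p)"
proof
  fix x
  show "qD z (poly p) x = poly (dz z p) x"
  proof (cases "x = 0")
    case True
    have "deriv (poly p) 0 = poly (pderiv p) 0"
      by (rule DERIV_imp_deriv) (rule poly_DERIV)
    also have "\<dots> = coeff p 1" by (simp add: poly_0_coeff_0 coeff_pderiv)
    also have "\<dots> = poly (dz z p) 0" using assms by (simp add: poly_0_coeff_0 coeff_dz qn_def)
    finally show ?thesis using True by (simp add: qD_def)
  next
    case False
    then show ?thesis using assms by (simp add: qD_def poly_dz)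
  qed
qed

lemma qn_0 [simp]: "qn z 0 = 0" by (simp add: qn_def)

lemma dg_aux:
  assumes "0 < (q::real)" "q < 1" "0 < (r::real)"
  shows "((1 - q * r)/(1-q)) * (s/2 * ((1 - 1/r)/(1-1/q)) + s * q / (2 * (1 - q))) = s * q^2 / (2 * (1 - q)^2) * (1 / (q * r) - 1)"
proof -
  define d where "d = 1 - q"
  have d: "d \<noteq> 0" "q \<noteq> 0" "r \<noteq> 0" using assms by (auto simp: d_def)
  have e: "(1 - 1/r)/(1-1/q) = - q * (r - 1) / (r * d)" using d by (simp add: field_simps d_def)
  have i: "s/2 * ((1 - 1/r)/(1-1/q)) + s * q / (2 * d) = s * q / (2 * d * r)"
    unfolding e using d by (simp add: field_simps)
  have j: "1 / (q * r) - 1 = (1 - q * r) / (q * r)" using d by (simp add: field_simps)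
  show ?thesis unfolding d_def[symmetric] i j using d by (simp add: field_simps power2_eq_square)
qed

lemma Lform:
  fixes q s a b x r F0 Fp Fm t0 t1 :: real
  assumes "x \<noteq> 0" "q \<noteq> 0" "q \<noteq> 1" "a \<noteq> 0" "b \<noteq> 0"
    and "t1 = s * q / (2 * (1 - q))" "t0 = - (s/2) * (a + b) * q / (1 - q)"
  shows "x * r * ((1/2) * s * (x - a) * (x - b) * (((F0 - Fp) / ((1 - q) * x) - (Fm - F0) / ((1 - q) * (x / q))) / ((1 - 1/q) * x))
           + (t1 * x + t0) * ((F0 - Fp) / ((1 - q) * x)))
     = q * s * a * b / 2 * r / ((1 - q)^2 * x) * (Fp - F0)
       - q * s * a * b / 2 * ((1 - x/a) * (1 - x/b) * r) * q / ((1 - q)^2 * x) * (F0 - Fm)"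
proof -
  define d where "d = 1 - q"
  have qd: "q = 1 - d" by (simp add: d_def)
  have d: "d \<noteq> 0" "1 - d \<noteq> 0" using assms by (auto simp: d_def)
  have e: "1 - 1/q = - d / q" using assms by (simp add: d_def field_simps)
  show ?thesis unfolding e assms(6,7) d_def[symmetric] unfolding qd
    using d assms(1,4,5) by (simp add: field_simps power2_eq_square)
qed

lemma Wform:
  fixes q c x r rm F0 Fp Fm G0 Gp Gm LF LG :: real
  assumes "x \<noteq> 0" "q \<noteq> 0" "q \<noteq> 1"
    and hF: "x * r * LF = c * r / ((1 - q)^2 * x) * (Fp - F0) - c * rm * q / ((1 - q)^2 * x) * (F0 - Fm)"
    and hG: "x * r * LG = c * r / ((1 - q)^2 * x) * (Gp - G0) - c * rm * q / ((1 - q)^2 * x) * (G0 - Gm)"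
  shows "x * (LF * G0 * r - F0 * LG * r) =
     - c * r / (1 - q) * (G0 * ((F0 - Fp) / ((1 - q) * x)) - F0 * ((G0 - Gp) / ((1 - q) * x)))
     - (- c * rm / (1 - q) * (Gm * ((Fm - F0) / ((1 - q) * (x / q))) - Fm * ((Gm - G0) / ((1 - q) * (x / q)))))"
proof -
  have "x * (LF * G0 * r - F0 * LG * r) = G0 * (x * r * LF) - F0 * (x * r * LG)" by (simp add: algebra_simps)
  also have "\<dots> = G0 * (c * r / ((1 - q)^2 * x) * (Fp - F0) - c * rm * q / ((1 - q)^2 * x) * (F0 - Fm))
     - F0 * (c * r / ((1 - q)^2 * x) * (Gp - G0) - c * rm * q / ((1 - q)^2 * x) * (G0 - Gm))"
    unfolding hF hG ..
  also have "\<dots> = - c * r / (1 - q) * (G0 * ((F0 - Fp) / ((1 - q) * x)) - F0 * ((G0 - Gp) / ((1 - q) * x)))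
     - (- c * rm / (1 - q) * (Gm * ((Fm - F0) / ((1 - q) * (x / q))) - Fm * ((Gm - G0) / ((1 - q) * (x / q)))))"
  proof -
    define d where "d = 1 - q"
    have d: "d \<noteq> 0" using assms by (simp add: d_def)
    show ?thesis unfolding d_def[symmetric] using d assms(1,2) by (simp add: field_simps power2_eq_square)
  qed
  finally show ?thesis .
qed

locale qsetup =
  fixes q s a b t0 t1 :: real
  assumes q0: "0 < q" and q1: "q < 1" and s0: "s \<noteq> 0" and a0: "a < 0" and b0: "0 < b"
    and ht1: "(1 - 1 / q) * t1 = - (1/2) * s"
    and ht0: "(1 - 1 / q) * t0 = (1/2) * s * (a + b)"
begin

definition sig :: "real poly" where "sig = [: s/2*a*b, -(s/2)*(a+b), s/2 :]"
definition tau :: "real poly" where "tau = [: t0, t1 :]"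
definition Lp :: "real poly \<Rightarrow> real poly" where
  "Lp p = sig * dz (1/q) (dz q p) + tau * dz q p"
definition dg :: "nat \<Rightarrow> real" where "dg m = qn q m * (s/2 * qn (1/q) (m - 1) + t1)"
definition bt :: "nat \<Rightarrow> real" where "bt m = qn q m * (-(s/2)*(a+b) * qn (1/q) (m - 1) + t0)"
definition gm :: "nat \<Rightarrow> real" where "gm m = qn q m * (s/2*a*b * qn (1/q) (m - 1))"

lemma coeff_Lp:
  "coeff (Lp p) k = dg k * coeff p k + bt (Suc k) * coeff p (Suc k) + gm (Suc (Suc k)) * coeff p (Suc (Suc k))"
proof (cases k)
  case 0
  then show ?thesis by (simp add: Lp_def sig_def tau_def coeff_dz dg_def bt_def gm_def mult_pCons_left algebra_simps)
next
  case (Suc j)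
  then show ?thesis
    by (cases j) (simp_all add: Lp_def sig_def tau_def coeff_dz dg_def bt_def gm_def mult_pCons_left algebra_simps)
qed

lemma t1_eq: "t1 = s * q / (2 * (1 - q))"
  using ht1 q0 q1 by (simp add: field_simps)

lemma dg_closed: "dg m = s * q^2 / (2 * (1 - q)^2) * (1 / q ^ m - 1)"
proof (cases m)
  case 0
  then show ?thesis by (simp add: dg_def)
next
  case (Suc j)
  define r where "r = q ^ j"
  have r0: "r > 0" using q0 by (simp add: r_def)
  have "dg m = ((1 - q * r)/(1-q)) * (s/2 * ((1 - 1/r)/(1-1/q)) + s * q / (2 * (1 - q)))"
    unfolding dg_def qn_def using t1_eq Suc by (simp add: r_def power_divide)
  also have "\<dots> = s * q^2 / (2 * (1 - q)^2) * (1 / (q * r) - 1)"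
    using q0 q1 r0 by (rule dg_aux)
  finally show ?thesis using Suc by (simp add: r_def)
qed

lemma dg_inj: "dg k = dg n \<Longrightarrow> k = n"
proof (rule ccontr)
  assume h: "dg k = dg n" "k \<noteq> n"
  have K: "s * q^2 / (2 * (1 - q)^2) \<noteq> 0" using s0 q0 q1 by simp
  from h(1) K have "1 / q ^ k = 1 / q ^ n" by (simp add: dg_closed)
  then have "q ^ k = q ^ n" by simp
  moreover have "q ^ k \<noteq> q ^ n" using power_inject_exp'[of q k n] h(2) q0 q1 by simp
  ultimately show False by simp
qed

lemma dg_lam: "dg m = - lam q t1 s m"
proof (cases m)
  case 0
  then show ?thesis by (simp add: dg_def lam_def qnum_def)
next
  case (Suc j)
  have e1: "qnum q (int m) = qn q m" by (simp add: qnum_def qn_def)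
  have "int m - 1 = int j" using Suc by simp
  then have e2: "qnum (1/q) (int m - 1) = qn (1/q) (m - 1)" using Suc by (simp add: qnum_def qn_def)
  show ?thesis unfolding dg_def lam_def e1 e2 by (simp add: algebra_simps)
qed

function cf :: "nat \<Rightarrow> nat \<Rightarrow> real" where
  "cf n k = (if n < k then 0 else if k = n then 1 else
     (bt (Suc k) * cf n (Suc k) + gm (Suc (Suc k)) * cf n (Suc (Suc k))) / (dg n - dg k))"
  by auto
termination by (relation "Wellfounded.measure (\<lambda>(n,k). n - k)") auto

declare cf.simps[simp del]

lemma cf_gt: "n < k \<Longrightarrow> cf n k = 0" by (subst cf.simps) simp
lemma cf_eq: "cf n n = 1" by (subst cf.simps) simp
lemma cf_lt: "k < n \<Longrightarrow> cf n k = (bt (Suc k) * cf n (Suc k) + gm (Suc (Suc k)) * cf n (Suc (Suc k))) / (dg n - dg k)"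
  by (subst cf.simps) simp

definition P :: "nat \<Rightarrow> real poly" where "P n = Abs_poly (cf n)"

lemma coeff_P: "coeff (P n) = cf n"
  unfolding P_def by (rule coeff_Abs_poly[of n]) (simp add: cf_gt)

lemma degree_P: "degree (P n) = n"
proof (rule antisym)
  show "degree (P n) \<le> n" by (rule degree_le) (simp add: coeff_P cf_gt)
  show "n \<le> degree (P n)" by (rule le_degree) (simp add: coeff_P cf_eq)
qed

lemma Lp_P: "Lp (P n) = smult (dg n) (P n)"
proof (rule poly_eqI)
  fix k
  have "dg k * cf n k + bt (Suc k) * cf n (Suc k) + gm (Suc (Suc k)) * cf n (Suc (Suc k)) = dg n * cf n k"
  proof (cases "n < k")
    case True then show ?thesis by (simp add: cf_gt)
  next
    case False
    show ?thesis
    proof (cases "k = n")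
      case True then show ?thesis by (simp add: cf_gt cf_eq)
    next
      case False
      with \<open>\<not> n < k\<close> have kn: "k < n" by simp
      then have "dg n - dg k \<noteq> 0" using dg_inj by fastforce
      then show ?thesis unfolding cf_lt[OF kn] by (simp add: field_simps)
    qed
  qed
  then show "coeff (Lp (P n)) k = coeff (smult (dg n) (P n)) k"
    by (simp add: coeff_Lp coeff_P)
qed

lemma qEHT_P: "qEHT q (\<lambda>x. (1/2) * s * (x - a) * (x - b)) (\<lambda>x. t1 * x + t0) (lam q t1 s n) (poly (P n))"
proof -
  have q1': "q \<noteq> 1" "1 / q \<noteq> 1" using q0 q1 by auto
  have "poly (Lp (P n)) x = (1/2) * s * (x - a) * (x - b) * poly (dz (1/q) (dz q (P n))) x
          + (t1 * x + t0) * poly (dz q (P n)) x" for x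
    by (simp add: Lp_def sig_def tau_def field_simps)
  moreover have "poly (Lp (P n)) x = - lam q t1 s n * poly (P n) x" for x
    using Lp_P dg_lam by simp
  ultimately show ?thesis unfolding qEHT_def qD_poly[OF q1'(1)] qD_poly[OF q1'(2)]
    by (metis add_eq_0_iff2 mult_minus_left)
qed

lemma t0_eq: "t0 = - (s/2) * (a + b) * q / (1 - q)"
  using ht0 q0 q1 by (simp add: field_simps)

definition rho :: "real \<Rightarrow> real" where "rho x = qpoch_inf (q*x/a) q * qpoch_inf (q*x/b) q"
definition cc :: real where "cc = q * s * a * b / 2"
definition W :: "real poly \<Rightarrow> real poly \<Rightarrow> real \<Rightarrow> real" where
  "W f g y = - cc * rho y / (1 - q) * (poly g y * poly (dz q f) y - poly f y * poly (dz q g) y)"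

lemma rho_rec: "rho (x/q) = (1 - x/a) * (1 - x/b) * rho x"
proof -
  have e1: "q * (x/q) / a = x / a" "q * (x/q) / b = x / b" using q0 by auto
  have e2: "x / a * q = q * x / a" "x / b * q = q * x / b" by auto
  show ?thesis unfolding rho_def e1 qpoch_rec[OF q0 q1, of "x/a"] qpoch_rec[OF q0 q1, of "x/b"] e2
    by (simp add: mult_ac)
qed

lemma rho_zero: "rho (a/q) = 0" "rho (b/q) = 0"
  using rho_rec[of a] rho_rec[of b] a0 b0 by auto

lemma Lp_form:
  assumes x: "x \<noteq> 0"
  shows "x * rho x * poly (Lp f) x = cc * rho x / ((1 - q)^2 * x) * (poly f (q*x) - poly f x)
           - cc * rho (x/q) * q / ((1 - q)^2 * x) * (poly f x - poly f (x/q))"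
proof -
  have qq: "q \<noteq> 0" "q \<noteq> 1" "1/q \<noteq> 1" using q0 q1 by auto
  have xq: "x / q \<noteq> 0" "q * (x / q) = x" "1 / q * x = x / q" using x qq by auto
  have D: "poly (dz q f) x = (poly f x - poly f (q*x)) / ((1 - q) * x)" using poly_dz[OF qq(2) x] .
  have Dm: "poly (dz q f) (x/q) = (poly f (x/q) - poly f x) / ((1 - q) * (x/q))"
    using poly_dz[OF qq(2) xq(1), of f] unfolding xq(2) .
  have DD: "poly (dz (1/q) (dz q f)) x = (poly (dz q f) x - poly (dz q f) (x/q)) / ((1 - 1/q) * x)"
    using poly_dz[OF qq(3) x, of "dz q f"] unfolding xq(3) .
  have Lx: "poly (Lp f) x = (1/2) * s * (x - a) * (x - b) * poly (dz (1/q) (dz q f)) x + (t1 * x + t0) * poly (dz q f) x"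
    by (simp add: Lp_def sig_def tau_def field_simps)
  show ?thesis unfolding Lx DD D Dm rho_rec cc_def
    using Lform[OF x qq(1,2) _ _ t1_eq t0_eq, of "rho x" "poly f x" "poly f (q*x)" "poly f (x/q)"] a0 b0
    by (simp add: mult.assoc)
qed

lemma W_tel:
  assumes x: "x \<noteq> 0"
  shows "x * (poly (Lp f) x * poly g x * rho x - poly f x * poly (Lp g) x * rho x) = W f g x - W f g (x/q)"
proof -
  have qq: "q \<noteq> 0" "q \<noteq> 1" using q0 q1 by auto
  have xq: "x / q \<noteq> 0" "q * (x / q) = x" using x qq by auto
  have D: "poly (dz q h) x = (poly h x - poly h (q*x)) / ((1 - q) * x)" for h using poly_dz[OF qq(2) x] .
  have Dm: "poly (dz q h) (x/q) = (poly h (x/q) - poly h x) / ((1 - q) * (x/q))" for h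
    using poly_dz[OF qq(2) xq(1), of h] unfolding xq(2) .
  show ?thesis unfolding W_def D Dm
    by (rule Wform[OF x qq Lp_form[OF x] Lp_form[OF x]])
qed

lemma beta_pos: "\<beta> < 1 \<Longrightarrow> 0 < 1 - \<beta> * q ^ k"
proof (cases "\<beta> \<le> 0")
  case True
  then have "\<beta> * q ^ k \<le> 0" using q0 by (simp add: mult_nonpos_nonneg)
  then show ?thesis by simp
next
  case False
  assume b1: "\<beta> < 1"
  have "q ^ k \<le> 1" using q0 q1 by (simp add: power_le_one)
  then have "\<beta> * q ^ k \<le> \<beta>" using False by (simp add: mult_left_le)
  then show ?thesis using b1 by simp
qed

lemma y0_cases:
  assumes "y0 = a \<or> y0 = b"
  shows "q * y0 / a < 1 \<and> q * y0 / b < 1 \<and> y0 \<noteq> 0"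
proof -
  have n: "q * a < 0" "0 < q * b" using q0 a0 b0 by (simp_all add: mult_pos_neg)
  show ?thesis using assms
  proof
    assume "y0 = a"
    then show ?thesis using n a0 b0 q1 by (simp add: divide_neg_pos)
  next
    assume "y0 = b"
    then show ?thesis using n a0 b0 q1 by (simp add: divide_pos_neg)
  qed
qed

lemma rho_lim:
  assumes y: "y0 = a \<or> y0 = b"
  shows "(\<lambda>N. rho (q^N * y0)) \<longlonglongrightarrow> 1"
proof -
  have e: "rho (q^N * y0) = qpoch_inf ((q*y0/a) * q^N) q * qpoch_inf ((q*y0/b) * q^N) q" for N
    unfolding rho_def by (simp add: mult_ac)
  have nz1: "1 - (q*y0/a) * q^k \<noteq> 0" for k
  proof -
    have "0 < 1 - (q*y0/a) * q^k" using y0_cases[OF y] by (intro beta_pos) simp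
    then show ?thesis by linarith
  qed
  have nz2: "1 - (q*y0/b) * q^k \<noteq> 0" for k
  proof -
    have "0 < 1 - (q*y0/b) * q^k" using y0_cases[OF y] by (intro beta_pos) simp
    then show ?thesis by linarith
  qed
  have "(\<lambda>N. qpoch_inf ((q*y0/a) * q^N) q * qpoch_inf ((q*y0/b) * q^N) q) \<longlonglongrightarrow> 1 * 1"
    by (intro tendsto_mult qpoch_tail_lim[OF q0 q1] nz1 nz2)
  then show ?thesis unfolding e by simp
qed

lemma rho_pos:
  assumes y: "y0 = a \<or> y0 = b"
  shows "0 < rho (q^j * y0)"
proof -
  have qj: "0 < q^j" "q * q ^ j < 1" using power_Suc_less_one[OF q0 q1, of j] q0 by simp_all
  have "q * (q^j * y0) = (q * q^j) * y0" by simp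
  have n: "q * q^j * a < 0" "0 < q * q^j * b" using q0 qj a0 b0 by (simp_all add: mult_pos_neg)
  have "q * (q^j * y0) / a < 1 \<and> q * (q^j * y0) / b < 1"
    using y
  proof
    assume "y0 = a"
    then show ?thesis using n a0 b0 qj by (simp add: divide_neg_pos mult.assoc)
  next
    assume "y0 = b"
    then show ?thesis using n a0 b0 qj by (simp add: divide_pos_neg mult.assoc)
  qed
  then have "\<And>k. 0 < 1 - (q * (q^j * y0) / a) * q^k" "\<And>k. 0 < 1 - (q * (q^j * y0) / b) * q^k"
    by (intro beta_pos; simp)+
  then show ?thesis unfolding rho_def
    by (intro mult_pos_pos qpoch_pos[OF q0 q1])
qed

lemma geo_lim: "(\<lambda>j. q^j * y0) \<longlonglongrightarrow> 0"
proof -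
  have "(\<lambda>j. q^j * y0) \<longlonglongrightarrow> 0 * y0"
    using q0 q1 by (intro tendsto_mult LIMSEQ_power_zero tendsto_const) simp
  then show ?thesis by simp
qed

lemma chain_lim:
  assumes y: "y0 = a \<or> y0 = b"
  shows "(\<lambda>j. poly p1 (q^j*y0) * poly p2 (q^j*y0) * rho (q^j*y0)) \<longlonglongrightarrow> poly p1 0 * poly p2 0"
proof -
  have "(\<lambda>j. poly p1 (q^j*y0) * poly p2 (q^j*y0) * rho (q^j*y0)) \<longlonglongrightarrow> poly p1 0 * poly p2 0 * 1"
    by (intro tendsto_intros geo_lim rho_lim[OF y])
  then show ?thesis by simp
qed

lemma summable_conv:
  assumes "X \<longlonglongrightarrow> L"
  shows "summable (\<lambda>j. q^j * X j)"
proof -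
  have "Bseq X" using assms by (intro convergent_imp_Bseq) (auto simp: convergent_def)
  then obtain K where K: "0 < K" "\<And>n. norm (X n) \<le> K" by (auto elim: BseqE)
  have "summable (\<lambda>j. K * q^j)" using q0 q1 by (intro summable_mult summable_geometric) simp
  moreover have "norm (q^j * X j) \<le> K * q^j" for j
    using K(2)[of j] q0 by (simp add: abs_mult mult_right_mono mult.commute)
  ultimately show ?thesis by (rule summable_comparison_test'[where N=0])
qed

lemma chain_summable:
  assumes y: "y0 = a \<or> y0 = b"
  shows "summable (\<lambda>j. q^j * (poly p1 (q^j*y0) * poly p2 (q^j*y0) * rho (q^j*y0)))"
  by (rule summable_conv[OF chain_lim[OF y]])

definition Lam :: "real poly \<Rightarrow> real poly \<Rightarrow> real" where
  "Lam f g = - cc * 1 / (1 - q) * (poly g 0 * poly (dz q f) 0 - poly f 0 * poly (dz q g) 0)"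

lemma W_lim:
  assumes y: "y0 = a \<or> y0 = b"
  shows "(\<lambda>N. W f g (q^N * y0)) \<longlonglongrightarrow> Lam f g"
  unfolding W_def Lam_def by (intro tendsto_intros geo_lim rho_lim[OF y]) (use q1 in simp)

lemma chain_sums:
  assumes y: "y0 = a \<or> y0 = b"
  shows "(\<lambda>j. (q^j*y0) * (poly (Lp f) (q^j*y0) * poly g (q^j*y0) * rho (q^j*y0)
                         - poly f (q^j*y0) * poly (Lp g) (q^j*y0) * rho (q^j*y0))) sums Lam f g"
proof -
  define V where "V j = W f g (q^j * y0 / q)" for j
  have y0: "y0 \<noteq> 0" using y0_cases[OF y] by simp
  have u: "(q^j*y0) * (poly (Lp f) (q^j*y0) * poly g (q^j*y0) * rho (q^j*y0)
            - poly f (q^j*y0) * poly (Lp g) (q^j*y0) * rho (q^j*y0)) = V (Suc j) - V j" for j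
  proof -
    have "q^j * y0 \<noteq> 0" using q0 y0 by simp
    moreover have "q ^ Suc j * y0 / q = q^j * y0" using q0 by simp
    ultimately show ?thesis unfolding V_def by (simp add: W_tel)
  qed
  have V0: "V 0 = 0" unfolding V_def W_def using y rho_zero by auto
  have "(\<lambda>n. V (Suc n)) \<longlonglongrightarrow> Lam f g"
  proof -
    have "V (Suc n) = W f g (q^n * y0)" for n using q0 by (simp add: V_def)
    then show ?thesis using W_lim[OF y] by simp
  qed
  then have "V \<longlonglongrightarrow> Lam f g" by (rule LIMSEQ_imp_Suc)
  then show ?thesis unfolding sums_def u sum_lessThan_telescope V0 by simp
qed

lemma Lp_sym:
  "qint q a b (\<lambda>x. poly (Lp f) x * poly g x * rho x) = qint q a b (\<lambda>x. poly f x * poly (Lp g) x * rho x)"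
proof -
  have key: "y0 * ((\<Sum>j. q^j * (poly (Lp f) (q^j*y0) * poly g (q^j*y0) * rho (q^j*y0)))
                 - (\<Sum>j. q^j * (poly f (q^j*y0) * poly (Lp g) (q^j*y0) * rho (q^j*y0)))) = Lam f g"
    if y: "y0 = a \<or> y0 = b" for y0
  proof -
    have s1: "summable (\<lambda>j. q^j * (poly (Lp f) (q^j*y0) * poly g (q^j*y0) * rho (q^j*y0)))"
      by (rule chain_summable[OF y])
    have s2: "summable (\<lambda>j. q^j * (poly f (q^j*y0) * poly (Lp g) (q^j*y0) * rho (q^j*y0)))"
      by (rule chain_summable[OF y])
    have "y0 * ((\<Sum>j. q^j * (poly (Lp f) (q^j*y0) * poly g (q^j*y0) * rho (q^j*y0)))
                 - (\<Sum>j. q^j * (poly f (q^j*y0) * poly (Lp g) (q^j*y0) * rho (q^j*y0))))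
        = (\<Sum>j. y0 * (q^j * (poly (Lp f) (q^j*y0) * poly g (q^j*y0) * rho (q^j*y0))
                 - q^j * (poly f (q^j*y0) * poly (Lp g) (q^j*y0) * rho (q^j*y0))))"
      unfolding suminf_diff[OF s1 s2] by (rule suminf_mult[symmetric]) (intro summable_diff s1 s2)
    also have "\<dots> = Lam f g"
      using sums_unique[OF chain_sums[OF y, of f g]] by (simp add: algebra_simps)
    finally show ?thesis .
  qed
  have "qint q a b (\<lambda>x. poly (Lp f) x * poly g x * rho x) - qint q a b (\<lambda>x. poly f x * poly (Lp g) x * rho x)
     = (1 - q) * (b * ((\<Sum>j. q^j * (poly (Lp f) (q^j*b) * poly g (q^j*b) * rho (q^j*b)))
                 - (\<Sum>j. q^j * (poly f (q^j*b) * poly (Lp g) (q^j*b) * rho (q^j*b)))))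
       - (1 - q) * (a * ((\<Sum>j. q^j * (poly (Lp f) (q^j*a) * poly g (q^j*a) * rho (q^j*a)))
                 - (\<Sum>j. q^j * (poly f (q^j*a) * poly (Lp g) (q^j*a) * rho (q^j*a)))))"
    unfolding qint_def by (simp add: algebra_simps)
  also have "\<dots> = 0" using key[of a] key[of b] by simp
  finally show ?thesis by simp
qed

lemma qint_cmult:
  assumes "summable (\<lambda>j. q^j * F (q^j * b))" "summable (\<lambda>j. q^j * F (q^j * a))"
  shows "qint q a b (\<lambda>x. c * F x) = c * qint q a b F"
proof -
  have e: "(\<lambda>j. q^j * (c * F (q^j * y))) = (\<lambda>j. c * (q^j * F (q^j * y)))" for y
    by (simp add: algebra_simps)
  show ?thesis unfolding qint_def e suminf_mult[OF assms(1)] suminf_mult[OF assms(2)]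
    by (simp add: algebra_simps)
qed

lemma P_nz: "P n \<noteq> 0"
proof
  assume "P n = 0"
  then have "coeff (P n) n = 0" by simp
  then show False by (simp add: coeff_P cf_eq)
qed

lemma main:
  "\<exists>(PP :: nat \<Rightarrow> real poly) (d2 :: nat \<Rightarrow> real).
           (\<forall>n. degree (PP n) = n
                 \<and> qEHT q (\<lambda>x. (1/2) * s * (x - a) * (x - b)) (\<lambda>x. t1 * x + t0) (lam q t1 s n) (poly (PP n))
                 \<and> d2 n \<noteq> 0)
         \<and> (\<forall>m n. qint q a b (\<lambda>x. poly (PP n) x * poly (PP m) x * rho x)
                    = (if m = n then d2 n else 0))"
proof -
  define d2 where "d2 n = qint q a b (\<lambda>x. poly (P n) x * poly (P n) x * rho x)" for n
  have A: "degree (P n) = n \<and> qEHT q (\<lambda>x. (1/2) * s * (x - a) * (x - b)) (\<lambda>x. t1 * x + t0) (lam q t1 s n) (poly (P n))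
      \<and> d2 n \<noteq> 0" for n
  proof (intro conjI)
  show "degree (P n) = n" by (rule degree_P)
  show "qEHT q (\<lambda>x. (1/2) * s * (x - a) * (x - b)) (\<lambda>x. t1 * x + t0) (lam q t1 s n) (poly (P n))"
    by (rule qEHT_P)
  show "d2 n \<noteq> 0"
  proof -
    have sb: "summable (\<lambda>j. q^j * (poly (P n) (q^j*b) * poly (P n) (q^j*b) * rho (q^j*b)))"
      by (rule chain_summable) simp
    have sa: "summable (\<lambda>j. q^j * (poly (P n) (q^j*a) * poly (P n) (q^j*a) * rho (q^j*a)))"
      by (rule chain_summable) simp
    have nn: "0 \<le> q^j * (poly (P n) (q^j*y) * poly (P n) (q^j*y) * rho (q^j*y))"
      if "y = a \<or> y = b" for j y
    proof -
      have h: "0 \<le> poly (P n) (q^j*y) * poly (P n) (q^j*y)" by simp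
      have r: "0 \<le> rho (q^j*y)" using rho_pos[OF that, of j] by simp
      have qq: "0 \<le> q^j" using q0 by simp
      show ?thesis by (rule mult_nonneg_nonneg[OF qq mult_nonneg_nonneg[OF h r]])
    qed
    obtain j where j: "poly (P n) (q^j*b) \<noteq> 0"
    proof (rule ccontr)
      assume "\<not> thesis"
      with that have all: "\<forall>j. poly (P n) (q^j*b) = 0" by blast
      have "range (\<lambda>j. q^j*b) \<subseteq> {x. poly (P n) x = 0}" using all by auto
      then have fin: "finite (range (\<lambda>j. q^j*b))"
        using poly_roots_finite[OF P_nz] by (rule finite_subset)
      have "inj (\<lambda>j::nat. q^j*b)"
        using b0 q0 q1 by (intro injI) (simp add: power_inject_exp')
      then have "finite (UNIV :: nat set)" using finite_imageD[OF fin] by blast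
      then show False by simp
    qed
    have "0 < q^j * (poly (P n) (q^j*b) * poly (P n) (q^j*b) * rho (q^j*b))"
    proof -
      have h: "0 < poly (P n) (q^j*b) * poly (P n) (q^j*b)" using j by (simp add: zero_less_mult_iff) (metis linorder_neqE_linordered_idom)
      have r: "0 < rho (q^j*b)" using rho_pos[of b j] by simp
      have qq: "0 < q^j" using q0 by simp
      show ?thesis by (rule mult_pos_pos[OF qq mult_pos_pos[OF h r]])
    qed
    then have pb: "0 < (\<Sum>j. q^j * (poly (P n) (q^j*b) * poly (P n) (q^j*b) * rho (q^j*b)))"
      using suminf_pos_iff[OF sb] nn by blast
    have pa: "0 \<le> (\<Sum>j. q^j * (poly (P n) (q^j*a) * poly (P n) (q^j*a) * rho (q^j*a)))"
      using nn by (intro suminf_nonneg sa) auto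
    have "0 < d2 n" unfolding d2_def qint_def
      using pb pa q0 q1 a0 b0 by (intro add_pos_nonneg mult_pos_pos mult_nonneg_nonneg) auto
    then show ?thesis by simp
  qed
  qed
  have B: "qint q a b (\<lambda>x. poly (P n) x * poly (P m) x * rho x) = (if m = n then d2 n else 0)" for m n
  proof (cases "m = n")
    case True then show ?thesis by (simp add: d2_def)
  next
    case False
    define I where "I = qint q a b (\<lambda>x. poly (P n) x * poly (P m) x * rho x)"
    have sb: "summable (\<lambda>j. q^j * (poly (P n) (q^j*b) * poly (P m) (q^j*b) * rho (q^j*b)))"
      by (rule chain_summable) simp
    have sa: "summable (\<lambda>j. q^j * (poly (P n) (q^j*a) * poly (P m) (q^j*a) * rho (q^j*a)))"
      by (rule chain_summable) simp
    have "qint q a b (\<lambda>x. poly (Lp (P n)) x * poly (P m) x * rho x)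
        = qint q a b (\<lambda>x. dg n * (poly (P n) x * poly (P m) x * rho x))"
      by (simp add: Lp_P mult_ac)
    also have "\<dots> = dg n * I" unfolding I_def by (rule qint_cmult[OF sb sa])
    finally have l: "qint q a b (\<lambda>x. poly (Lp (P n)) x * poly (P m) x * rho x) = dg n * I" .
    have "qint q a b (\<lambda>x. poly (P n) x * poly (Lp (P m)) x * rho x)
        = qint q a b (\<lambda>x. dg m * (poly (P n) x * poly (P m) x * rho x))"
      by (simp add: Lp_P mult_ac)
    also have "\<dots> = dg m * I" unfolding I_def by (rule qint_cmult[OF sb sa])
    finally have r: "qint q a b (\<lambda>x. poly (P n) x * poly (Lp (P m)) x * rho x) = dg m * I" .
    have "dg n * I = dg m * I" using Lp_sym[of "P n" "P m"] l r by simp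
    moreover have "dg n \<noteq> dg m" using False dg_inj by metis
    ultimately have "I = 0" by simp
    then show ?thesis using False by (simp add: I_def)
  qed
  show ?thesis using A B by blast
qed

end


theorem theorem5p12:
  fixes q s a b t0 t1 :: real
  assumes "0 < q" "q < 1"
    and "s \<noteq> 0"
    and "a < 0" "0 < b"
    and "(1 - 1 / q) * t1 = - (1/2) * s"
    and "(1 - 1 / q) * t0 = (1/2) * s * (a + b)"
  defines "\<sigma>1 \<equiv> (\<lambda>x::real. (1/2) * s * (x - a) * (x - b))"
    and "\<tau> \<equiv> (\<lambda>x::real. t1 * x + t0)"
    and "\<rho> \<equiv> (\<lambda>x::real. qpoch_inf (q * x / a) q * qpoch_inf (q * x / b) q)"
  shows "\<exists>(P :: nat \<Rightarrow> real poly) (d2 :: nat \<Rightarrow> real).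
           (\<forall>n. degree (P n) = n
                 \<and> qEHT q \<sigma>1 \<tau> (lam q t1 s n) (poly (P n))
                 \<and> d2 n \<noteq> 0)
         \<and> (\<forall>m n. qint q a b (\<lambda>x. poly (P n) x * poly (P m) x * \<rho> x)
                    = (if m = n then d2 n else 0))"
proof -
  interpret qsetup q s a b t0 t1 using assms(1-7) by unfold_locales
  have r: "\<rho> = rho" unfolding \<rho>_def by (simp add: rho_def fun_eq_iff)
  show ?thesis unfolding \<sigma>1_def \<tau>_def r by (rule main)
qed

end
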